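(* Let $f:(0,1]\to(0,\infty)$ be the compliance--volume fraction Pareto front (as described in the context) and let $f^{-1}:[f(1),+\infty[\,\to(0,1]$ be its reciprocal (inverse) function, so that $f^{-1}(f(1))=1$. Then for every real $a>1$ and every $x\in[f(1),+\infty[$, $$a\,f^{-1}(a x)\le f^{-1}(x).$$
   Context: Setting: a 2D structural topology optimization problem (compliance minimization under a volume fraction constraint) on a fixed design domain. For a volume fraction $V_f\in(0,1]$ (the ratio of the volume of the design to the volume of the design domain), $f(V_f)$ denotes the globally optimal compliance attainable by a design of volume fraction $V_f$, computed for a unit load, unit out-of-plane thickness and unit Young's modulus; the graph of $f$ is the compliance--volume fraction Pareto front. Standing assumptions used for $f$: $f$ is differentiable on $(0,1]$ with $f'(V_f)<0$ (so $f$ is strictly decreasing), and $f(V_f)\to+\infty$ as $V_f\searrow 0$, so that $f$ is a bijection from $(0,1]$ onto $[f(1),+\infty[$ with inverse $f^{-1}$. The efficiency ratio (ER) is $n(V_f)=-V_f\,f'(V_f)/f(V_f)$, and it is assumed that $n(V_f)\le 1$ for all $V_f\in(0,1]$. *)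

theory Defs
  imports "HOL-Analysis.Analysis"
begin

definition efficiency_ratio :: "(real \<Rightarrow> real) \<Rightarrow> (real \<Rightarrow> real) \<Rightarrow> real \<Rightarrow> real" where
  "efficiency_ratio f Df V = - V * Df V / f V"

end

theory Submission
  imports Defs
begin

theorem lemma2:
  fixes f Df :: "real \<Rightarrow> real"
  assumes pos: "\<And>V. V \<in> {0<..1} \<Longrightarrow> f V > 0"
    and deriv: "\<And>V. V \<in> {0<..1} \<Longrightarrow> (f has_real_derivative Df V) (at V within {0<..1})"
    and neg: "\<And>V. V \<in> {0<..1} \<Longrightarrow> Df V < 0"
    and lim0: "filterlim f at_top (at_right 0)"
    and ER: "\<And>V. V \<in> {0<..1} \<Longrightarrow> efficiency_ratio f Df V \<le> 1"
    and a: "a > 1"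
    and x: "x \<ge> f 1"
  shows "a * inv_into {0<..1} f (a * x) \<le> inv_into {0<..1} f x"
proof -
  have cont: "continuous_on {0<..1} f"
    using deriv continuous_on_eq_continuous_within DERIV_continuous by blast
  have dat: "(f has_real_derivative Df V) (at V)" if "0 < V" "V < 1" for V
  proof -
    have "(f has_real_derivative Df V) (at V within {0<..<1})"
      using deriv[of V] that by (auto intro: DERIV_subset)
    then show ?thesis using that at_within_open[of V "{0<..<1}"] by auto
  qed
  have dec: "f t < f s" if "0 < s" "s < t" "t \<le> 1" for s t
  proof (rule DERIV_neg_imp_decreasing_open[where f=f and a=s and b=t])
    show "s < t" by fact
    show "\<exists>y. DERIV f z :> y \<and> y < 0" if "s < z" "z < t" for z
      using dat[of z] neg[of z] that \<open>0 < s\<close> \<open>t \<le> 1\<close> by auto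
    show "continuous_on {s..t} f"
      using cont by (rule continuous_on_subset) (use that in auto)
  qed
  have inj: "inj_on f {0<..1}"
  proof (rule inj_onI)
    fix s t assume "s \<in> {0<..1}" "t \<in> {0<..1}" "f s = f t"
    then show "s = t" using dec[of s t] dec[of t s] by (cases s t rule: linorder_cases) auto
  qed
  have surj: "\<exists>t\<in>{0<..1}. f t = y" if yge: "y \<ge> f 1" for y
  proof -
    have "eventually (\<lambda>t. f t > y) (at_right 0)"
      using lim0 by (simp add: filterlim_at_top_dense)
    then obtain b where b: "b > 0" "\<And>t. 0 < t \<Longrightarrow> t < b \<Longrightarrow> f t > y"
      unfolding eventually_at_right_field by auto
    define t where "t = min (b/2) (1/2)"
    have t: "0 < t" "t < b" "t \<le> 1" using b unfolding t_def by auto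
    have "f t > y" using b t by auto
    moreover have "continuous_on {t..1} f"
      using cont by (rule continuous_on_subset) (use t in auto)
    ultimately obtain z where "t \<le> z" "z \<le> 1" "f z = y"
      using IVT2'[of f 1 y t] yge t by auto
    then show ?thesis using t by auto
  qed
  have xpos: "x > 0" using pos[of 1] x by auto
  define u where "u = inv_into {0<..1} f (a * x)"
  define v where "v = inv_into {0<..1} f x"
  have ax: "a * x \<ge> f 1" using a xpos x by (smt (verit) mult_less_cancel_right1)
  obtain tu where tu: "tu \<in> {0<..1}" "f tu = a * x" using surj[OF ax] by auto
  obtain tv where tv: "tv \<in> {0<..1}" "f tv = x" using surj[OF x] by auto
  have u: "u \<in> {0<..1}" "f u = a * x"
  proof -
    have "a * x \<in> f ` {0<..1}" using tu by force
    then show "u \<in> {0<..1}" "f u = a * x" unfolding u_def using inv_into_into[of _ f "{0<..1}"] f_inv_into_f by (metis, metis)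
  qed
  have v: "v \<in> {0<..1}" "f v = x"
  proof -
    have "x \<in> f ` {0<..1}" using tv by force
    then show "v \<in> {0<..1}" "f v = x" unfolding v_def using inv_into_into[of _ f "{0<..1}"] f_inv_into_f by (metis, metis)
  qed
  have uv: "u < v"
  proof (rule ccontr)
    assume "\<not> u < v"
    then have "f u \<le> f v" using dec[of v u] u v by (cases "u = v") auto
    then show False using u v a xpos by auto
  qed
  have g: "u * f u \<le> v * f v"
  proof (rule DERIV_nonneg_imp_increasing_open[where f = "\<lambda>V. V * f V" and a=u and b=v, simplified])
    show "u \<le> v" using uv by simp
    show "\<exists>y. DERIV (\<lambda>V. V * f V) z :> y \<and> y \<ge> 0" if "u < z" "z < v" for z
    proof -
      have z: "0 < z" "z < 1" using that u v by auto
      have "DERIV (\<lambda>V. V * f V) z :> 1 * f z + z * Df z"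
        using DERIV_mult[OF DERIV_ident dat[OF z]] by (simp add: mult.commute)
      moreover have "- z * Df z / f z \<le> 1" using ER[of z] z unfolding efficiency_ratio_def by auto
      then have "- z * Df z \<le> f z" using pos[of z] z by (simp add: le_divide_eq)
      ultimately show ?thesis by (intro exI[of _ "1 * f z + z * Df z"]) auto
    qed
    show "continuous_on {u..v} (\<lambda>V. V * f V)"
      by (intro continuous_intros continuous_on_subset[OF cont]) (use u v in auto)
  qed
  then have "(a * u) * x \<le> v * x" using u v by (simp add: algebra_simps)
  then have "a * u \<le> v" using xpos by simp
  then show ?thesis unfolding u_def v_def .
qed

end
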